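(* Every 4-regular graph with girth 5 has a strong edge-coloring using at most 22 colors.
   Context: A strong edge-coloring of a graph is a proper edge-coloring in which, in addition, no two edges of the same color lie on a common path of length three. The girth of a graph is the length of its shortest cycle (a loop counts as a cycle of length 1 and a pair of parallel edges as a cycle of length 2). *)

theory Defs
  imports Main "HOL-Library.Extended_Nat"
begin

text \<open>A finite simple graph: finite vertex set V and a set E of 2-element subsets of V.
  (A multigraph of girth 5 has no loops or parallel edges, hence is simple.)\<close>
definition simple_graph :: "'a set \<Rightarrow> 'a set set \<Rightarrow> bool" where
  "simple_graph V E \<longleftrightarrow> finite V \<and> (\<forall>e\<in>E. \<exists>u v. u \<in> V \<and> v \<in> V \<and> u \<noteq> v \<and> e = {u, v})"

definition degree :: "'a set set \<Rightarrow> 'a \<Rightarrow> nat" where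
  "degree E v = card {e \<in> E. v \<in> e}"

definition regular :: "'a set \<Rightarrow> 'a set set \<Rightarrow> nat \<Rightarrow> bool" where
  "regular V E d \<longleftrightarrow> (\<forall>v\<in>V. degree E v = d)"

definition is_cycle :: "'a set set \<Rightarrow> 'a list \<Rightarrow> bool" where
  "is_cycle E vs \<longleftrightarrow> length vs \<ge> 3 \<and> distinct vs \<and>
     (\<forall>i < length vs. {vs ! i, vs ! ((i + 1) mod length vs)} \<in> E)"

text \<open>Girth: length of a shortest cycle (infinity for forests).\<close>
definition girth :: "'a set set \<Rightarrow> enat" where
  "girth E = (INF vs \<in> {vs. is_cycle E vs}. enat (length vs))"

definition path3 :: "'a set set \<Rightarrow> 'a \<Rightarrow> 'a \<Rightarrow> 'a \<Rightarrow> 'a \<Rightarrow> bool" where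
  "path3 E a b c d \<longleftrightarrow> distinct [a, b, c, d] \<and> {a, b} \<in> E \<and> {b, c} \<in> E \<and> {c, d} \<in> E"

definition proper_edge_coloring :: "'a set set \<Rightarrow> ('a set \<Rightarrow> 'c) \<Rightarrow> bool" where
  "proper_edge_coloring E col \<longleftrightarrow>
     (\<forall>e\<in>E. \<forall>f\<in>E. e \<noteq> f \<and> e \<inter> f \<noteq> {} \<longrightarrow> col e \<noteq> col f)"

text \<open>Strong edge-coloring: proper, and no two edges of the same colour lie on a common
  path of length three (the only pair on such a path not already sharing a vertex is
  its first and last edge).\<close>
definition strong_edge_coloring :: "'a set set \<Rightarrow> ('a set \<Rightarrow> 'c) \<Rightarrow> bool" where
  "strong_edge_coloring E col \<longleftrightarrow> proper_edge_coloring E col \<and>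
     (\<forall>a b c d. path3 E a b c d \<longrightarrow> col {a, b} \<noteq> col {c, d})"

end

theory Submission
  imports Defs
begin


lemma greedy:
  fixes C :: "'b \<Rightarrow> 'b \<Rightarrow> bool" and rk :: "'b \<Rightarrow> nat" and c0 :: "'b \<Rightarrow> nat"
  assumes fin: "finite X" and finP: "finite P" and disj: "X \<inter> P = {}"
    and sym: "\<And>x y. C x y \<Longrightarrow> C y x"
    and irr: "\<And>x. \<not> C x x"
    and c0P: "\<And>x. x \<in> P \<Longrightarrow> c0 x < k"
    and c0prop: "\<And>x y. x \<in> P \<Longrightarrow> y \<in> P \<Longrightarrow> C x y \<Longrightarrow> c0 x \<noteq> c0 y"
    and cnt: "\<And>x. x \<in> X \<Longrightarrow> card {y\<in>X. C x y \<and> rk y \<le> rk x} + card (c0 ` {y\<in>P. C x y}) < k"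
  shows "\<exists>col. (\<forall>x\<in>X \<union> P. col x < k) \<and> (\<forall>x\<in>X \<union> P. \<forall>y\<in>X \<union> P. C x y \<longrightarrow> col x \<noteq> col y)"
proof -
  have "S \<subseteq> X \<longrightarrow> (\<exists>col. (\<forall>x\<in>P. col x = c0 x) \<and> (\<forall>x\<in>S. col x < k) \<and>
          (\<forall>x\<in>S \<union> P. \<forall>y\<in>S \<union> P. C x y \<longrightarrow> col x \<noteq> col y))" if "finite S" for S
    using that
  proof (induction S rule: finite_ranking_induct[where f = rk])
    case empty
    then show ?case using c0prop by (intro impI exI[of _ c0]) auto
  next
    case (insert x S)
    show ?case
    proof
      assume sub: "insert x S \<subseteq> X"
      then obtain col where col1: "\<forall>x\<in>P. col x = c0 x" and col2: "\<forall>x\<in>S. col x < k"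
        and col3: "\<forall>x\<in>S \<union> P. \<forall>y\<in>S \<union> P. C x y \<longrightarrow> col x \<noteq> col y"
        using insert.IH by auto
      show "\<exists>col. (\<forall>x\<in>P. col x = c0 x) \<and> (\<forall>x\<in>insert x S. col x < k) \<and>
          (\<forall>xa\<in>insert x S \<union> P. \<forall>y\<in>insert x S \<union> P. C xa y \<longrightarrow> col xa \<noteq> col y)"
      proof (cases "x \<in> S")
        case True
        then show ?thesis using col1 col2 col3 by (metis insert_absorb)
      next
        case False
        have xX: "x \<in> X" using sub by auto
        have xP: "x \<notin> P" using xX disj by auto
        define F where "F = col ` {y\<in>S. C x y} \<union> c0 ` {y\<in>P. C x y}"
        have s1: "{y\<in>S. C x y} \<subseteq> {y\<in>X. C x y \<and> rk y \<le> rk x}"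
          using sub insert.hyps(2) by auto
        have "card (col ` {y\<in>S. C x y}) \<le> card {y\<in>S. C x y}"
          using insert.hyps(1) by (intro card_image_le) auto
        also have "\<dots> \<le> card {y\<in>X. C x y \<and> rk y \<le> rk x}"
          using s1 fin by (intro card_mono) auto
        finally have "card F < k" unfolding F_def
          using cnt[OF xX] card_Un_le[of "col ` {y\<in>S. C x y}" "c0 ` {y\<in>P. C x y}"] by linarith
        moreover have "finite F" unfolding F_def using insert.hyps(1)
          using finP by auto
        ultimately have "\<not> {..<k} \<subseteq> F"
          using card_mono[of F "{..<k}"] by auto
        then obtain c where c: "c < k" "c \<notin> F" by auto
        show ?thesis
        proof (intro exI[of _ "col(x := c)"] conjI ballI impI)
          fix y assume "y \<in> P" then show "(col(x := c)) y = c0 y" using col1 xP by auto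
        next
          fix y assume "y \<in> insert x S" then show "(col(x := c)) y < k" using col2 c by auto
        next
          fix y z assume y: "y \<in> insert x S \<union> P" and z: "z \<in> insert x S \<union> P" and Cyz: "C y z"
          show "(col(x := c)) y \<noteq> (col(x := c)) z"
          proof (cases "y = x")
            case True
            then have "z \<noteq> x" using Cyz irr by auto
            then have "col z \<in> F" using z Cyz True col1 unfolding F_def by auto
            then show ?thesis using True \<open>z \<noteq> x\<close> c by auto
          next
            case yx: False
            show ?thesis
            proof (cases "z = x")
              case True
              then have "col y \<in> F" using y Cyz yx col1 sym unfolding F_def by auto
              then show ?thesis using True yx c by auto
            next
              case False
              then show ?thesis using yx y z Cyz col3 by auto
            qed
          qed
        qed
      qed
    qed
  qed
  from this[OF fin] obtain col where "\<forall>x\<in>P. col x = c0 x" "\<forall>x\<in>X. col x < k"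
     "\<forall>x\<in>X \<union> P. \<forall>y\<in>X \<union> P. C x y \<longrightarrow> col x \<noteq> col y" by auto
  then show ?thesis using c0P by (intro exI[of _ col]) auto
qed



definition conflict :: "'a set set \<Rightarrow> 'a set \<Rightarrow> 'a set \<Rightarrow> bool" where
 "conflict E e f \<longleftrightarrow> e \<noteq> f \<and> (e \<inter> f \<noteq> {} \<or> (\<exists>g\<in>E. g \<inter> e \<noteq> {} \<and> g \<inter> f \<noteq> {}))"

locale g45 =
  fixes V :: "'a set" and E :: "'a set set"
  assumes sg: "simple_graph V E" and reg: "regular V E 4"
    and no3: "\<And>a b c. {a,b} \<in> E \<Longrightarrow> {b,c} \<in> E \<Longrightarrow> {c,a} \<in> E \<Longrightarrow> False"
    and no4: "\<And>a b c d. {a,b} \<in> E \<Longrightarrow> {b,c} \<in> E \<Longrightarrow> {c,d} \<in> E \<Longrightarrow> {d,a} \<in> E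
               \<Longrightarrow> a \<noteq> c \<Longrightarrow> b \<noteq> d \<Longrightarrow> False"
begin

definition nb :: "'a \<Rightarrow> 'a set" where "nb v = {w. {v,w} \<in> E}"
definition Eat :: "'a \<Rightarrow> 'a set set" where "Eat v = {f\<in>E. v \<in> f}"

lemma finV: "finite V" using sg unfolding simple_graph_def by auto

lemma edge_form: "e \<in> E \<Longrightarrow> \<exists>u v. u \<in> V \<and> v \<in> V \<and> u \<noteq> v \<and> e = {u, v}"
  using sg unfolding simple_graph_def by auto

lemma EPow: "E \<subseteq> Pow V" using edge_form by blast

lemma finE: "finite E" using EPow finV by (meson finite_Pow_iff finite_subset)

lemma esym: "{a,b} \<in> E \<Longrightarrow> {b,a} \<in> E" by (simp add: insert_commute)

lemma eneq: "{a,b} \<in> E \<Longrightarrow> a \<noteq> b"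
  using edge_form by (metis doubleton_eq_iff insert_absorb2)

lemma eV: "{a,b} \<in> E \<Longrightarrow> a \<in> V \<and> b \<in> V"
  using EPow by auto

lemma Eat_nb: "Eat v = (\<lambda>w. {v,w}) ` nb v"
proof
  show "Eat v \<subseteq> (\<lambda>w. {v,w}) ` nb v"
  proof
    fix f assume "f \<in> Eat v"
    then have "f \<in> E" "v \<in> f" unfolding Eat_def by auto
    then obtain u w where "f = {u,w}" using edge_form by blast
    then show "f \<in> (\<lambda>w. {v,w}) ` nb v" using \<open>f \<in> E\<close> \<open>v \<in> f\<close> unfolding nb_def
      by (auto simp: insert_commute)
  qed
qed (auto simp: Eat_def nb_def)

lemma card_Eat: "v \<in> V \<Longrightarrow> card (Eat v) = 4"
  using reg unfolding regular_def degree_def Eat_def by auto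

lemma fin_nb: "finite (nb v)"
proof -
  have "nb v \<subseteq> V" unfolding nb_def using eV by auto
  then show ?thesis using finV finite_subset by auto
qed

lemma card_nb: "v \<in> V \<Longrightarrow> card (nb v) = 4"
proof -
  assume v: "v \<in> V"
  have "inj_on (\<lambda>w. {v,w}) (nb v)" unfolding inj_on_def nb_def
    by (metis doubleton_eq_iff eneq mem_Collect_eq)
  then have "card (Eat v) = card (nb v)" using Eat_nb card_image by metis
  then show ?thesis using card_Eat v by simp
qed

lemma nb_iff: "w \<in> nb v \<longleftrightarrow> {v,w} \<in> E" unfolding nb_def by simp

lemma common: "x \<noteq> y \<Longrightarrow> card (nb x \<inter> nb y) \<le> 1"
proof (rule ccontr)
  assume xy: "x \<noteq> y" and "\<not> card (nb x \<inter> nb y) \<le> 1"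
  then have "1 < card (nb x \<inter> nb y)" by simp
  then obtain a b where ab: "a \<in> nb x \<inter> nb y" "b \<in> nb x \<inter> nb y" "a \<noteq> b"
    using card_le_Suc0_iff_eq[of "nb x \<inter> nb y"] fin_nb by auto
  then have "{x,a} \<in> E" "{a,y} \<in> E" "{y,b} \<in> E" "{b,x} \<in> E"
    unfolding nb_def by (auto simp: insert_commute)
  then show False using no4 xy ab(3) by blast
qed

lemma card_N: assumes e: "e \<in> E" shows "card {f\<in>E. conflict E e f} \<le> 24"
proof -
  obtain u v where uv: "u \<in> V" "v \<in> V" "u \<noteq> v" "e = {u,v}" using edge_form e by blast
  define A where "A = (Eat u - {e}) \<union> (Eat v - {e})"
  define B where "B = (\<Union>w\<in>nb u - {v}. Eat w - {{u,w}})"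
  define D where "D = (\<Union>w\<in>nb v - {u}. Eat w - {{v,w}})"
  have sub: "{f\<in>E. conflict E e f} \<subseteq> A \<union> B \<union> D"
  proof
    fix f assume "f \<in> {f\<in>E. conflict E e f}"
    then have f: "f \<in> E" "f \<noteq> e" "e \<inter> f \<noteq> {} \<or> (\<exists>g\<in>E. g \<inter> e \<noteq> {} \<and> g \<inter> f \<noteq> {})"
      unfolding conflict_def by auto
    show "f \<in> A \<union> B \<union> D"
    proof (cases "u \<in> f \<or> v \<in> f")
      case True
      then show ?thesis using f uv unfolding A_def Eat_def by auto
    next
      case False
      then obtain g where g: "g \<in> E" "g \<inter> e \<noteq> {}" "g \<inter> f \<noteq> {}" using f uv by auto
      obtain p q where pq: "g = {p,q}" "p \<noteq> q" using edge_form g(1) by blast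
      show ?thesis
      proof (cases "u \<in> g")
        case True
        then obtain w where w: "g = {u,w}" using pq by auto
        then have "w \<in> f" using g(3) False by auto
        then have "w \<noteq> v" using False by auto
        moreover have "w \<in> nb u" using w g(1) nb_iff by auto
        moreover have "f \<in> Eat w - {{u,w}}" using \<open>w \<in> f\<close> f(1) False unfolding Eat_def by auto
        ultimately show ?thesis unfolding B_def by blast
      next
        case nu: False
        then have "v \<in> g" using g(2) uv(4) by auto
        then obtain w where w: "g = {v,w}" using pq by auto
        then have "w \<in> f" using g(3) False by auto
        then have "w \<noteq> u" using False by auto
        moreover have "w \<in> nb v" using w g(1) nb_iff by auto
        moreover have "f \<in> Eat w - {{v,w}}" using \<open>w \<in> f\<close> f(1) False unfolding Eat_def by auto
        ultimately show ?thesis unfolding D_def by blast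
      qed
    qed
  qed
  have eE: "e \<in> Eat u" "e \<in> Eat v" using e uv unfolding Eat_def by auto
  have cA: "card A \<le> 6"
  proof -
    have "card (Eat u - {e}) = 3" using card_Eat[OF uv(1)] eE by simp
    moreover have "card (Eat v - {e}) = 3" using card_Eat[OF uv(2)] eE by simp
    ultimately show ?thesis unfolding A_def using card_Un_le[of "Eat u - {e}" "Eat v - {e}"] by simp
  qed
  have c3: "card (Eat w - {{x,w}}) \<le> 3" if "w \<in> nb x" for w x
  proof -
    have "{x,w} \<in> E" using that nb_iff by auto
    then have "w \<in> V" "{x,w} \<in> Eat w" using eV unfolding Eat_def by auto
    then show ?thesis using card_Eat by simp
  qed
  have cB: "card B \<le> 9"
  proof -
    have "card B \<le> (\<Sum>w\<in>nb u - {v}. card (Eat w - {{u,w}}))"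
      unfolding B_def by (rule card_UN_le) (simp add: fin_nb)
    also have "\<dots> \<le> (\<Sum>w\<in>nb u - {v}. 3)" by (intro sum_mono c3) auto
    also have "\<dots> \<le> 9"
    proof -
      have "v \<in> nb u" using e uv nb_iff by auto
      then have "card (nb u - {v}) = 3" using card_nb[OF uv(1)] by (simp add: fin_nb)
      then show ?thesis by simp
    qed
    finally show ?thesis .
  qed
  have cD: "card D \<le> 9"
  proof -
    have "card D \<le> (\<Sum>w\<in>nb v - {u}. card (Eat w - {{v,w}}))"
      unfolding D_def by (rule card_UN_le) (simp add: fin_nb)
    also have "\<dots> \<le> (\<Sum>w\<in>nb v - {u}. 3)" by (intro sum_mono c3) auto
    also have "\<dots> \<le> 9"
    proof -
      have "u \<in> nb v" using e uv nb_iff by (auto simp: insert_commute)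
      then have "card (nb v - {u}) = 3" using card_nb[OF uv(2)] by (simp add: fin_nb)
      then show ?thesis by simp
    qed
    finally show ?thesis .
  qed
  have finABD: "finite (A \<union> B \<union> D)"
    using finE unfolding A_def B_def D_def Eat_def by (auto simp: fin_nb)
  have "card {f\<in>E. conflict E e f} \<le> card (A \<union> B \<union> D)" using card_mono[OF finABD sub] .
  also have "\<dots> \<le> card A + card B + card D" using card_Un_le
    by (metis add_le_mono1 le_trans)
  finally show ?thesis using cA cB cD by simp
qed

end


fun reach :: "'a set set \<Rightarrow> nat \<Rightarrow> 'a \<Rightarrow> 'a \<Rightarrow> bool" where
  "reach E 0 u v \<longleftrightarrow> u = v"
| "reach E (Suc n) u v \<longleftrightarrow> reach E n u v \<or> (\<exists>w. reach E n u w \<and> {w,v} \<in> E)"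

lemma reach_mono: "reach E n u v \<Longrightarrow> n \<le> m \<Longrightarrow> reach E m u v"
proof (induction m)
  case 0 then show ?case by simp
next
  case (Suc m) then show ?case by (cases "n = Suc m") (auto simp: le_Suc_eq)
qed

lemma reach_step: "reach E n u w \<Longrightarrow> {w,v} \<in> E \<Longrightarrow> reach E (Suc n) u v" by auto

lemma nonconf:
  assumes "a \<noteq> c" "a \<noteq> d" "b \<noteq> c" "b \<noteq> d"
    "{a,c} \<notin> E" "{a,d} \<notin> E" "{b,c} \<notin> E" "{b,d} \<notin> E"
    and edges: "\<And>g. g \<in> E \<Longrightarrow> \<exists>p q. g = {p,q}"
  shows "\<not> conflict E {a,b} {c,d}"
proof
  assume "conflict E {a,b} {c,d}"
  then obtain g where g: "g \<in> E" "g \<inter> {a,b} \<noteq> {}" "g \<inter> {c,d} \<noteq> {}"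
    using assms(1-4) unfolding conflict_def by auto
  obtain p q where "g = {p,q}" using edges g(1) by blast
  then show False using g assms(1-8) by (auto simp: insert_commute)
qed

lemma conflict_sym: "conflict E e f \<longleftrightarrow> conflict E f e"
  unfolding conflict_def by blast

lemma conf_via: "h \<in> E \<Longrightarrow> u \<in> h \<Longrightarrow> u \<in> e \<Longrightarrow> w \<in> h \<Longrightarrow> w \<in> f \<Longrightarrow> e \<noteq> f \<Longrightarrow> conflict E e f"
  unfolding conflict_def by auto

context g45
begin

definition config :: "'a \<Rightarrow> 'a \<Rightarrow> 'a set set \<Rightarrow> 'a set set \<Rightarrow> bool" where
  "config r s T Q \<longleftrightarrow> {r,s} \<in> E \<and> T \<subseteq> E \<and> Q \<subseteq> E \<and> card T = 3 \<and> card Q = 2 \<and> T \<inter> Q = {} \<and>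
     (\<forall>f\<in>T \<union> Q. r \<notin> f \<and> (\<forall>v\<in>f. reach E 3 r v)) \<and>
     (\<forall>f\<in>T \<union> Q. \<forall>g\<in>T \<union> Q. f \<noteq> g \<longrightarrow> f \<inter> g = {}) \<and>
     (\<forall>f\<in>T. \<forall>g\<in>T. \<not> conflict E f g) \<and> (\<forall>f\<in>Q. \<forall>g\<in>Q. \<not> conflict E f g) \<and>
     (\<forall>x\<in>nb r. \<forall>f\<in>T. conflict E {r,x} f) \<and> (\<forall>f\<in>Q. conflict E {r,s} f)"

lemma edges2: "g \<in> E \<Longrightarrow> \<exists>p q. g = {p,q}" using edge_form by blast

lemma avoid1: "finite A \<Longrightarrow> card (A \<inter> B) < card A \<Longrightarrow> \<exists>y\<in>A. y \<notin> B"
  by (metis Int_absorb2 less_irrefl subsetI)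

lemma card_Int_Un: "finite A \<Longrightarrow> card (A \<inter> (B1 \<union> B2)) \<le> card (A \<inter> B1) + card (A \<inter> B2)"
  by (metis Int_Un_distrib card_Un_le)

lemma nbr3: "{x,r} \<in> E \<Longrightarrow> card (nb x - {r}) = 3"
proof -
  assume h: "{x,r} \<in> E"
  then have "x \<in> V" "r \<in> nb x" using eV nb_iff by auto
  then show ?thesis using card_nb fin_nb by simp
qed

lemma pick2:
  assumes "x \<noteq> y" "{x,r} \<in> E"
  shows "\<exists>w\<in>nb x - {r}. w \<notin> nb y"
proof -
  have "card ((nb x - {r}) \<inter> nb y) \<le> card (nb x \<inter> nb y)"
    by (intro card_mono) (auto simp: fin_nb)
  also have "\<dots> \<le> 1" using common assms(1) .
  finally show ?thesis using nbr3[OF assms(2)] avoid1[of "nb x - {r}" "nb y"] fin_nb by simp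
qed

lemma pick3:
  assumes "x \<noteq> y1" "x \<noteq> y2" "{x,r} \<in> E"
  shows "\<exists>w\<in>nb x - {r}. w \<notin> nb y1 \<and> w \<notin> nb y2"
proof -
  have "card ((nb x - {r}) \<inter> (nb y1 \<union> nb y2)) \<le> card ((nb x - {r}) \<inter> nb y1) + card ((nb x - {r}) \<inter> nb y2)"
    by (rule card_Int_Un) (simp add: fin_nb)
  also have "card ((nb x - {r}) \<inter> nb y1) \<le> card (nb x \<inter> nb y1)"
    by (intro card_mono) (auto simp: fin_nb)
  also have "card ((nb x - {r}) \<inter> nb y2) \<le> card (nb x \<inter> nb y2)"
    by (intro card_mono) (auto simp: fin_nb)
  finally have "card ((nb x - {r}) \<inter> (nb y1 \<union> nb y2)) \<le> 2" using common[OF assms(1)] common[OF assms(2)]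
    by linarith
  then show ?thesis using nbr3[OF assms(3)] avoid1[of "nb x - {r}" "nb y1 \<union> nb y2"] fin_nb by simp
qed

end

context g45
begin

lemma pair_from:
  assumes ab: "a \<noteq> b" "{s,a} \<in> E" "{s,b} \<in> E"
    and ga: "card (nb a - {s} - Y) \<ge> 1" and gb: "card (nb b - {s} - Y) \<ge> 2"
  shows "\<exists>z z'. z \<in> nb a - {s} - Y \<and> z' \<in> nb b - {s} - Y \<and> {z,z'} \<notin> E"
proof -
  obtain z where z: "z \<in> nb a - {s} - Y" using ga by (metis card.empty ex_in_conv not_one_le_zero)
  have "1 < card (nb b - {s} - Y)" using gb by simp
  then obtain w1 w2 where w: "w1 \<in> nb b - {s} - Y" "w2 \<in> nb b - {s} - Y" "w1 \<noteq> w2"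
    using card_le_Suc0_iff_eq[of "nb b - {s} - Y"] fin_nb by auto
  have za: "{a,z} \<in> E" using z nb_iff by auto
  have zb: "z \<noteq> b"
  proof
    assume "z = b" then show False using no3[of s a b] ab za by (simp add: insert_commute)
  qed
  have "\<not> ({z,w1} \<in> E \<and> {z,w2} \<in> E)"
  proof
    assume h: "{z,w1} \<in> E \<and> {z,w2} \<in> E"
    have "{b,w1} \<in> E" "{b,w2} \<in> E" using w nb_iff by auto
    then show False using no4[of z w1 b w2] h zb w(3) by (simp add: insert_commute)
  qed
  then show ?thesis using z w by blast
qed

lemma pair_exists:
  assumes rs: "{r,s} \<in> E" and Yf: "finite Y" and Yc: "card Y \<le> 3" and Ys: "s \<notin> Y"
  shows "\<exists>a b z z'. a \<in> nb s - {r} \<and> b \<in> nb s - {r} \<and> a \<noteq> b \<and>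
     z \<in> nb a - {s} - Y \<and> z' \<in> nb b - {s} - Y \<and> {z,z'} \<notin> E"
proof -
  have "card (nb s - {r}) = 3" using nbr3 rs esym by blast
  then obtain c1 c2 c3 where C: "nb s - {r} = {c1,c2,c3}" "c1 \<noteq> c2" "c2 \<noteq> c3" "c1 \<noteq> c3"
    using card_3_iff by metis
  have cE: "{s,c1} \<in> E" "{s,c2} \<in> E" "{s,c3} \<in> E" using C(1) nb_iff by auto
  have g: "card (nb c - {s} - Y) \<ge> 3 - card (nb c \<inter> Y)" if "{s,c} \<in> E" for c
  proof -
    have "card (nb c - {s}) = 3" using nbr3 that esym by blast
    moreover have "card (nb c - {s} - Y) = card (nb c - {s}) - card ((nb c - {s}) \<inter> Y)"
      by (rule card_Diff_subset_Int) (simp add: Yf)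
    moreover have "card ((nb c - {s}) \<inter> Y) \<le> card (nb c \<inter> Y)"
      by (rule card_mono) (auto simp: Yf)
    ultimately show ?thesis by linarith
  qed
  have dj: "(nb c \<inter> Y) \<inter> (nb c' \<inter> Y) = {}" if "c \<noteq> c'" "{s,c} \<in> E" "{s,c'} \<in> E" for c c'
  proof (rule ccontr)
    assume "(nb c \<inter> Y) \<inter> (nb c' \<inter> Y) \<noteq> {}"
    then obtain y where y: "y \<in> nb c" "y \<in> nb c'" "y \<in> Y" by auto
    have "s \<in> nb c" "s \<in> nb c'" using that nb_iff esym by auto
    then have "{y,s} \<subseteq> nb c \<inter> nb c'" using y by auto
    moreover have "y \<noteq> s" using y Ys by auto
    ultimately have "2 \<le> card (nb c \<inter> nb c')"
      by (metis card_2_iff card_mono fin_nb finite_Int)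
    then show False using common[OF that(1)] by simp
  qed
  have "card (nb c1 \<inter> Y) + card (nb c2 \<inter> Y) + card (nb c3 \<inter> Y)
      = card ((nb c1 \<inter> Y) \<union> (nb c2 \<inter> Y) \<union> (nb c3 \<inter> Y))"
  proof -
    have "card ((nb c1 \<inter> Y) \<union> (nb c2 \<inter> Y)) = card (nb c1 \<inter> Y) + card (nb c2 \<inter> Y)"
      by (rule card_Un_disjoint) (use Yf dj[OF C(2) cE(1) cE(2)] in auto)
    moreover have "card ((nb c1 \<inter> Y) \<union> (nb c2 \<inter> Y) \<union> (nb c3 \<inter> Y)) =
        card ((nb c1 \<inter> Y) \<union> (nb c2 \<inter> Y)) + card (nb c3 \<inter> Y)"
      by (rule card_Un_disjoint) (use Yf dj[OF C(4) cE(1) cE(3)] dj[OF C(3) cE(2) cE(3)] in auto)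
    ultimately show ?thesis by simp
  qed
  also have "\<dots> \<le> card Y" by (rule card_mono) (auto simp: Yf)
  finally have sum: "card (nb c1 \<inter> Y) + card (nb c2 \<inter> Y) + card (nb c3 \<inter> Y) \<le> 3" using Yc by simp
  have g1: "card (nb c1 - {s} - Y) \<ge> 3 - card (nb c1 \<inter> Y)" using g cE by blast
  have g2: "card (nb c2 - {s} - Y) \<ge> 3 - card (nb c2 \<inter> Y)" using g cE by blast
  have g3: "card (nb c3 - {s} - Y) \<ge> 3 - card (nb c3 \<inter> Y)" using g cE by blast
  have mem: "c1 \<in> nb s - {r}" "c2 \<in> nb s - {r}" "c3 \<in> nb s - {r}" using C(1) by auto
  have "(card (nb c2 - {s} - Y) \<ge> 1 \<and> card (nb c1 - {s} - Y) \<ge> 2) \<or>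
        (card (nb c3 - {s} - Y) \<ge> 1 \<and> card (nb c1 - {s} - Y) \<ge> 2) \<or>
        (card (nb c1 - {s} - Y) \<ge> 1 \<and> card (nb c2 - {s} - Y) \<ge> 2) \<or>
        (card (nb c3 - {s} - Y) \<ge> 1 \<and> card (nb c2 - {s} - Y) \<ge> 2) \<or>
        (card (nb c1 - {s} - Y) \<ge> 1 \<and> card (nb c3 - {s} - Y) \<ge> 2) \<or>
        (card (nb c2 - {s} - Y) \<ge> 1 \<and> card (nb c3 - {s} - Y) \<ge> 2)"
    using g1 g2 g3 sum by linarith
  then show ?thesis
  proof (elim disjE conjE)
    assume "card (nb c2 - {s} - Y) \<ge> 1" "card (nb c1 - {s} - Y) \<ge> 2"
    then show ?thesis using pair_from[of c2 c1 s Y] C cE mem by blast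
  next
    assume "card (nb c3 - {s} - Y) \<ge> 1" "card (nb c1 - {s} - Y) \<ge> 2"
    then show ?thesis using pair_from[of c3 c1 s Y] C cE mem by blast
  next
    assume "card (nb c1 - {s} - Y) \<ge> 1" "card (nb c2 - {s} - Y) \<ge> 2"
    then show ?thesis using pair_from[of c1 c2 s Y] C cE mem by blast
  next
    assume "card (nb c3 - {s} - Y) \<ge> 1" "card (nb c2 - {s} - Y) \<ge> 2"
    then show ?thesis using pair_from[of c3 c2 s Y] C cE mem by blast
  next
    assume "card (nb c1 - {s} - Y) \<ge> 1" "card (nb c3 - {s} - Y) \<ge> 2"
    then show ?thesis using pair_from[of c1 c3 s Y] C cE mem by blast
  next
    assume "card (nb c2 - {s} - Y) \<ge> 1" "card (nb c3 - {s} - Y) \<ge> 2"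
    then show ?thesis using pair_from[of c2 c3 s Y] C cE mem by blast
  qed
qed

end

context g45
begin

lemma config_exists:
  assumes rV: "r \<in> V"
  shows "\<exists>s T Q. config r s T Q"
proof -
  have c4: "card (nb r) = 4" using card_nb rV by simp
  then obtain s where s: "s \<in> nb r" by (metis card.empty ex_in_conv zero_neq_numeral)
  have "card (nb r - {s}) = 3" using c4 s fin_nb by simp
  then obtain x1 x2 x3 where X: "nb r - {s} = {x1,x2,x3}" "x1 \<noteq> x2" "x2 \<noteq> x3" "x1 \<noteq> x3"
    using card_3_iff by metis
  have rs: "{r,s} \<in> E" using s nb_iff by auto
  have rx: "{r,x1} \<in> E" "{r,x2} \<in> E" "{r,x3} \<in> E" using X(1) nb_iff by auto
  have xs: "x1 \<noteq> s" "x2 \<noteq> s" "x3 \<noteq> s" using X(1) by auto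
  have xr: "{x1,r} \<in> E" "{x2,r} \<in> E" "{x3,r} \<in> E" using rx esym by auto
  have tri: "False" if "{a,b} \<in> E" "{b,c} \<in> E" "{a,c} \<in> E" for a b c
    using no3[of a b c] that esym by blast
  have sq: "False" if "{a,b} \<in> E" "{b,c} \<in> E" "{c,d} \<in> E" "{a,d} \<in> E" "a \<noteq> c" "b \<noteq> d" for a b c d
    using no4[of a b c d] that esym by blast
  have "card (nb x1 - {r}) = 3" using nbr3 xr by blast
  then obtain y1 where y1: "y1 \<in> nb x1 - {r}" by (metis card.empty ex_in_conv zero_neq_numeral)
  have x1y1: "{x1,y1} \<in> E" "y1 \<noteq> r" using y1 nb_iff by auto
  have y1x2: "x2 \<noteq> y1" using tri[of r x1 x2] rx x1y1 by auto
  obtain y2 where y2: "y2 \<in> nb x2 - {r}" "y2 \<notin> nb y1" using pick2[OF y1x2 xr(2)] by blast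
  have x2y2: "{x2,y2} \<in> E" "y2 \<noteq> r" using y2 nb_iff by auto
  have y1x3: "x3 \<noteq> y1" using tri[of r x1 x3] rx x1y1 by auto
  have y2x3: "x3 \<noteq> y2" using tri[of r x2 x3] rx x2y2 by auto
  obtain y3 where y3: "y3 \<in> nb x3 - {r}" "y3 \<notin> nb y1" "y3 \<notin> nb y2"
    using pick3[OF y1x3 y2x3 xr(3)] by blast
  have x3y3: "{x3,y3} \<in> E" "y3 \<noteq> r" using y3 nb_iff by auto
  have nyy: "{y1,y2} \<notin> E" "{y1,y3} \<notin> E" "{y2,y3} \<notin> E" using y2 y3 nb_iff by auto
  define Y where "Y = {y1,y2,y3}"
  have ys: "y1 \<noteq> s" "y2 \<noteq> s" "y3 \<noteq> s"
    using tri[of r x1 s] tri[of r x2 s] tri[of r x3 s] rx rs x1y1 x2y2 x3y3 by auto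
  have "card Y \<le> 3" unfolding Y_def by (rule order_trans[OF card_insert_le_m1]) (auto simp: card_insert_le_m1)
  then obtain a b z z' where P: "a \<in> nb s - {r}" "b \<in> nb s - {r}" "a \<noteq> b"
     "z \<in> nb a - {s} - Y" "z' \<in> nb b - {s} - Y" "{z,z'} \<notin> E"
    using pair_exists[OF rs, of Y] ys unfolding Y_def by auto
  have sa: "{s,a} \<in> E" "{s,b} \<in> E" "a \<noteq> r" "b \<noteq> r" using P nb_iff by auto
  have az: "{a,z} \<in> E" "{b,z'} \<in> E" "z \<noteq> s" "z' \<noteq> s" using P nb_iff by auto
  have zY: "z \<noteq> y1" "z \<noteq> y2" "z \<noteq> y3" "z' \<noteq> y1" "z' \<noteq> y2" "z' \<noteq> y3" using P unfolding Y_def by auto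
  have xy: "x1 \<noteq> y1" "x2 \<noteq> y2" "x3 \<noteq> y3" using eneq x1y1 x2y2 x3y3 by auto
  have xy': "x1 \<noteq> y2" "x1 \<noteq> y3" "x2 \<noteq> y1" "x2 \<noteq> y3" "x3 \<noteq> y1" "x3 \<noteq> y2"
    using tri[of r x1 x2] tri[of r x1 x3] tri[of r x2 x3] tri[of r x2 x1] tri[of r x3 x1] tri[of r x3 x2]
      rx x1y1 x2y2 x3y3 by auto
  have yy: "y1 \<noteq> y2" "y1 \<noteq> y3" "y2 \<noteq> y3"
    using sq[of r x1 y1 x2] sq[of r x1 y1 x3] sq[of r x2 y2 x3] rx x1y1 x2y2 x3y3 X x1y1 x2y2 x3y3
    by (auto simp: insert_commute)
  have ax: "a \<noteq> x1" "a \<noteq> x2" "a \<noteq> x3" "b \<noteq> x1" "b \<noteq> x2" "b \<noteq> x3"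
    using tri[of r s x1] tri[of r s x2] tri[of r s x3] rs sa rx by (auto simp: insert_commute)
  have ay: "a \<noteq> y1" "a \<noteq> y2" "a \<noteq> y3" "b \<noteq> y1" "b \<noteq> y2" "b \<noteq> y3"
    using sq[of r x1 y1 s] sq[of r x2 y2 s] sq[of r x3 y3 s] rs sa rx x1y1 x2y2 x3y3 xs
    by (auto simp: insert_commute)
  have zx: "z \<noteq> x1" "z \<noteq> x2" "z \<noteq> x3" "z' \<noteq> x1" "z' \<noteq> x2" "z' \<noteq> x3"
    using sq[of r s a x1] sq[of r s a x2] sq[of r s a x3] sq[of r s b x1] sq[of r s b x2] sq[of r s b x3]
      rs sa az rx xs by (auto simp: insert_commute)
  have za: "z \<noteq> a" "z' \<noteq> b" "z \<noteq> b" "z' \<noteq> a" "z \<noteq> z'"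
    using eneq az tri[of s a b] tri[of s b a] sq[of s a z b] sa az P(3) by (auto simp: insert_commute)
  have zr: "z \<noteq> r" "z' \<noteq> r" using tri[of r s a] tri[of r s b] rs sa az by (auto simp: insert_commute)
  have xr': "x1 \<noteq> r" "x2 \<noteq> r" "x3 \<noteq> r" using eneq rx by auto
  have nxx: "{x1,x2} \<notin> E" "{x1,x3} \<notin> E" "{x2,x3} \<notin> E" "{x2,x1} \<notin> E" "{x3,x1} \<notin> E" "{x3,x2} \<notin> E"
    using tri[of r x1 x2] tri[of r x1 x3] tri[of r x2 x3] rx by (auto simp: insert_commute)
  have nxy: "{x1,y2} \<notin> E" "{x1,y3} \<notin> E" "{x2,y1} \<notin> E" "{x2,y3} \<notin> E" "{x3,y1} \<notin> E" "{x3,y2} \<notin> E"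
    using sq[of r x1 y2 x2] sq[of r x1 y3 x3] sq[of r x2 y1 x1] sq[of r x2 y3 x3] sq[of r x3 y1 x1]
      sq[of r x3 y2 x2] rx x1y1 x2y2 x3y3 X x1y1 x2y2 x3y3 by (auto simp: insert_commute)
  have nyx: "{y1,x2} \<notin> E" "{y1,x3} \<notin> E" "{y2,x1} \<notin> E" "{y2,x3} \<notin> E" "{y3,x1} \<notin> E" "{y3,x2} \<notin> E"
    using nxy by (auto simp: insert_commute)
  have nyy': "{y2,y1} \<notin> E" "{y3,y1} \<notin> E" "{y3,y2} \<notin> E" using nyy by (auto simp: insert_commute)
  have nab: "{a,b} \<notin> E" "{a,z'} \<notin> E" "{z,b} \<notin> E" "{z,z'} \<notin> E"
    using tri[of s a b] sq[of s a z' b] sq[of s a z b] sa az P(3) P(6) za by (auto simp: insert_commute)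
  define T where "T = {{x1,y1},{x2,y2},{x3,y3}}"
  define Q where "Q = {{a,z},{b,z'}}"
  have dist: "distinct [x1,y1,x2,y2,x3,y3,a,z,b,z']"
    using X xy xy' yy ax ay zx za zY P(3) by auto
  show ?thesis
  proof (rule exI[of _ s], rule exI[of _ T], rule exI[of _ Q])
    have c1: "{r,s} \<in> E" by (rule rs)
    have c2: "T \<subseteq> E" "Q \<subseteq> E" unfolding T_def Q_def using x1y1 x2y2 x3y3 az by auto
    have c3: "card T = 3" unfolding T_def using dist by (simp add: doubleton_eq_iff)
    have c4: "card Q = 2" unfolding Q_def using dist by (simp add: doubleton_eq_iff)
    have c5: "T \<inter> Q = {}" unfolding T_def Q_def using dist by (auto simp: doubleton_eq_iff)
    have r1: "reach E 1 r x1" "reach E 1 r x2" "reach E 1 r x3" "reach E 1 r s" using rx rs by auto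
    have r2: "reach E 2 r y1" "reach E 2 r y2" "reach E 2 r y3" "reach E 2 r a" "reach E 2 r b"
      using reach_step[OF r1(1) x1y1(1)] reach_step[OF r1(2) x2y2(1)] reach_step[OF r1(3) x3y3(1)]
        reach_step[OF r1(4) sa(1)] reach_step[OF r1(4) sa(2)] by (auto simp: numeral_2_eq_2)
    have r3: "reach E 3 r z" "reach E 3 r z'"
      using reach_step[OF r2(4) az(1)] reach_step[OF r2(5) az(2)] by (auto simp: numeral_3_eq_3 numeral_2_eq_2)
    have r3': "reach E 3 r v" if "reach E 1 r v \<or> reach E 2 r v" for v
      using that reach_mono[of E 1 r v 3] reach_mono[of E 2 r v 3] by auto
    have c6: "\<forall>f\<in>T \<union> Q. r \<notin> f \<and> (\<forall>v\<in>f. reach E 3 r v)"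
      unfolding T_def Q_def using r1 r2 r3 r3' xr' x1y1 x2y2 x3y3 sa zr by auto
    have c7: "\<forall>f\<in>T \<union> Q. \<forall>g\<in>T \<union> Q. f \<noteq> g \<longrightarrow> f \<inter> g = {}"
      unfolding T_def Q_def using dist by auto
    have c8: "\<forall>f\<in>T. \<forall>g\<in>T. \<not> conflict E f g"
    proof -
      have n12: "\<not> conflict E {x1,y1} {x2,y2}"
        by (rule nonconf[OF _ _ _ _ _ _ _ _ edges2]) (use dist nxx nxy nyx nyy in auto)
      have n13: "\<not> conflict E {x1,y1} {x3,y3}"
        by (rule nonconf[OF _ _ _ _ _ _ _ _ edges2]) (use dist nxx nxy nyx nyy in auto)
      have n23: "\<not> conflict E {x2,y2} {x3,y3}"
        by (rule nonconf[OF _ _ _ _ _ _ _ _ edges2]) (use dist nxx nxy nyx nyy in auto)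
      have "\<not> conflict E f f" for f by (simp add: conflict_def)
      then show ?thesis unfolding T_def using n12 n13 n23 conflict_sym by auto
    qed
    have c9: "\<forall>f\<in>Q. \<forall>g\<in>Q. \<not> conflict E f g"
    proof -
      have n12: "\<not> conflict E {a,z} {b,z'}"
        by (rule nonconf[OF _ _ _ _ _ _ _ _ edges2]) (use dist nab in auto)
      have "\<not> conflict E f f" for f by (simp add: conflict_def)
      then show ?thesis unfolding Q_def using n12 conflict_sym by auto
    qed
    have c10: "\<forall>x\<in>nb r. \<forall>f\<in>T. conflict E {r,x} f"
    proof (intro ballI)
      fix x f assume "x \<in> nb r" "f \<in> T"
      then obtain xi yi where f: "f = {xi,yi}" "{r,xi} \<in> E" "r \<noteq> xi" "r \<noteq> yi"
        unfolding T_def using rx xr' x1y1 x2y2 x3y3 by auto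
      show "conflict E {r,x} f"
        by (rule conf_via[OF f(2), of r _ xi]) (use f in auto)
    qed
    have c11: "\<forall>f\<in>Q. conflict E {r,s} f"
    proof
      fix f assume "f \<in> Q"
      then obtain ai zi where f: "f = {ai,zi}" "{s,ai} \<in> E" "r \<noteq> ai" "r \<noteq> zi"
        unfolding Q_def using sa zr by auto
      show "conflict E {r,s} f"
        by (rule conf_via[OF f(2), of s _ ai]) (use f in auto)
    qed
    show "config r s T Q" unfolding config_def
      using c1 c2 c3 c4 c5 c6 c7 c8 c9 c10 c11 by blast
  qed
qed

end


lemma reach_prepend: "reach E n u v \<Longrightarrow> {w,u} \<in> E \<Longrightarrow> reach E (Suc n) w v"
proof (induction n arbitrary: v)
  case 0 then show ?case by auto
next
  case (Suc n)
  from Suc.prems(1) show ?case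
  proof (cases "reach E n u v")
    case True
    then have "reach E (Suc n) w v" using Suc.IH Suc.prems(2) by blast
    then show ?thesis by simp
  next
    case False
    then obtain x where "reach E n u x" "{x,v} \<in> E" using Suc.prems(1) by auto
    then show ?thesis using Suc.IH Suc.prems(2) by auto
  qed
qed

lemma reach_sym: "reach E n u v \<Longrightarrow> reach E n v u"
proof (induction n arbitrary: v)
  case 0 then show ?case by auto
next
  case (Suc n)
  show ?case
  proof (cases "reach E n u v")
    case True then show ?thesis using Suc.IH by simp
  next
    case False
    then obtain x where x: "reach E n u x" "{x,v} \<in> E" using Suc.prems by auto
    have "{v,x} \<in> E" using x(2) by (simp add: insert_commute)
    then show ?thesis using reach_prepend[OF Suc.IH[OF x(1)]] by blast
  qed
qed

lemma reach_trans: "reach E m u v \<Longrightarrow> reach E n v w \<Longrightarrow> reach E (m + n) u w"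
proof (induction n arbitrary: w)
  case 0 then show ?case by simp
next
  case (Suc n)
  show ?case
  proof (cases "reach E n v w")
    case True then show ?thesis using Suc.IH[OF Suc.prems(1)] by simp
  next
    case False
    then obtain x where x: "reach E n v x" "{x,w} \<in> E" using Suc.prems by auto
    then show ?thesis using Suc.IH[OF Suc.prems(1) x(1)] by auto
  qed
qed

lemma count_bound:
  assumes fN: "finite N" and L: "L \<subseteq> N - P" and T: "T \<subseteq> N \<inter> P" and S: "S \<subseteq> N - P - L"
  shows "card S + card (c0 ` (N \<inter> P)) + card L + card T \<le> card N + card (c0 ` T)"
proof -
  have f: "finite (N - P)" "finite (N \<inter> P)" "finite L" "finite T" using fN L T
    by (auto intro: finite_subset)
  have "card S \<le> card (N - P - L)" using S f by (intro card_mono) auto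
  also have "\<dots> = card (N - P) - card L" using L f by (simp add: card_Diff_subset)
  finally have s1: "card S + card L \<le> card (N - P)" using L f card_mono[of "N - P" L] by linarith
  have "card (c0 ` (N \<inter> P)) \<le> card (c0 ` T \<union> c0 ` (N \<inter> P - T))"
    using f by (intro card_mono) auto
  also have "\<dots> \<le> card (c0 ` T) + card (c0 ` (N \<inter> P - T))" by (rule card_Un_le)
  also have "\<dots> \<le> card (c0 ` T) + card (N \<inter> P - T)" using f
    by (intro add_left_mono card_image_le) auto
  also have "\<dots> = card (c0 ` T) + card (N \<inter> P) - card T" using T f
    by (simp add: card_Diff_subset card_mono)
  finally have s2: "card (c0 ` (N \<inter> P)) + card T \<le> card (c0 ` T) + card (N \<inter> P)"
    using T f card_mono[of "N \<inter> P" T] by linarith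
  have "card N = card (N - P) + card (N \<inter> P)"
    using fN by (metis Diff_Diff_Int Int_commute card_Diff_subset_Int Int_lower1 card_mono
      finite_Int add.commute le_add_diff_inverse Diff_Int2 inf.absorb_iff2)
  then show ?thesis using s1 s2 by linarith
qed


context g45
begin

lemma cfgD:
  assumes "config r s T Q"
  shows "{r,s} \<in> E" "T \<subseteq> E" "Q \<subseteq> E" "card T = 3" "card Q = 2" "T \<inter> Q = {}"
    "\<And>f. f \<in> T \<union> Q \<Longrightarrow> r \<notin> f"
    "\<And>f v. f \<in> T \<union> Q \<Longrightarrow> v \<in> f \<Longrightarrow> reach E 3 r v"
    "\<And>f g. f \<in> T \<union> Q \<Longrightarrow> g \<in> T \<union> Q \<Longrightarrow> f \<noteq> g \<Longrightarrow> f \<inter> g = {}"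
    "\<And>f g. f \<in> T \<Longrightarrow> g \<in> T \<Longrightarrow> \<not> conflict E f g"
    "\<And>f g. f \<in> Q \<Longrightarrow> g \<in> Q \<Longrightarrow> \<not> conflict E f g"
    "\<And>x f. x \<in> nb r \<Longrightarrow> f \<in> T \<Longrightarrow> conflict E {r,x} f"
    "\<And>f. f \<in> Q \<Longrightarrow> conflict E {r,s} f"
  using assms unfolding config_def by simp_all

lemma main:
  "\<exists>col :: 'a set \<Rightarrow> nat. (\<forall>e\<in>E. col e < 22) \<and> (\<forall>e\<in>E. \<forall>f\<in>E. conflict E e f \<longrightarrow> col e \<noteq> col f)"
proof -
  define far where "far R \<longleftrightarrow> R \<subseteq> V \<and> (\<forall>r\<in>R. \<forall>r'\<in>R. r \<noteq> r' \<longrightarrow> \<not> reach E 7 r r')" for R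
  have "finite {R. far R}" unfolding far_def using finV by auto
  moreover have "{R. far R} \<noteq> {}" using far_def by auto
  ultimately obtain R where Rf: "far R" and Rmax: "\<And>R'. far R' \<Longrightarrow> R \<subseteq> R' \<Longrightarrow> R = R'"
    using finite_has_maximal[of "{R. far R}"] by auto
  have RV: "R \<subseteq> V" and Rfar: "\<And>r r'. r \<in> R \<Longrightarrow> r' \<in> R \<Longrightarrow> r \<noteq> r' \<Longrightarrow> \<not> reach E 7 r r'"
    using Rf unfolding far_def by auto
  have cover: "\<exists>r\<in>R. reach E 7 r v" if "v \<in> V" for v
  proof (rule ccontr)
    assume h: "\<not> (\<exists>r\<in>R. reach E 7 r v)"
    have vR: "v \<notin> R" using reach_mono[of E 0 v v 7] h by auto
    have "far (insert v R)" unfolding far_def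
    proof (intro conjI ballI impI)
      show "insert v R \<subseteq> V" using RV that by auto
      fix a b assume a: "a \<in> insert v R" and b: "b \<in> insert v R" and ab: "a \<noteq> b"
      show "\<not> reach E 7 a b"
      proof (cases "a = v")
        case True
        then have "b \<in> R" using b ab by auto
        then show ?thesis using h reach_sym[of E 7 v b] True by blast
      next
        case False
        then have aR: "a \<in> R" using a by auto
        show ?thesis
        proof (cases "b = v")
          case True then show ?thesis using h aR by auto
        next
          case False then show ?thesis using Rfar aR b ab by auto
        qed
      qed
    qed
    then show False using Rmax[of "insert v R"] vR by auto
  qed
  have "\<forall>r\<in>V. \<exists>p. config r (fst p) (fst (snd p)) (snd (snd p))"
  proof
    fix r assume "r \<in> V"
    then obtain s T Q where "config r s T Q" using config_exists by blast
    then show "\<exists>p. config r (fst p) (fst (snd p)) (snd (snd p))" by (intro exI[of _ "(s,T,Q)"]) simp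
  qed
  then obtain cf where cf: "\<forall>r\<in>V. config r (fst (cf r)) (fst (snd (cf r))) (snd (snd (cf r)))"
    by (metis bchoice)
  define sf where "sf r = fst (cf r)" for r
  define Tf where "Tf r = fst (snd (cf r))" for r
  define Qf where "Qf r = snd (snd (cf r))" for r
  have cfg: "config r (sf r) (Tf r) (Qf r)" if "r \<in> R" for r
    using cf that RV unfolding sf_def Tf_def Qf_def by blast
  define P where "P = (\<Union>r\<in>R. Tf r \<union> Qf r)"
  define TT where "TT = (\<Union>r\<in>R. Tf r)"
  define c0 :: "'a set \<Rightarrow> nat" where "c0 f = (if f \<in> TT then 0 else 1)" for f
  define X where "X = E - P"
  define special where "special e \<longleftrightarrow> (\<exists>r\<in>R. e = {r, sf r})" for e
  define de where "de e = (LEAST n. \<exists>r\<in>R. \<exists>x\<in>e. reach E n r x)" for e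
  define rk where "rk e = (if e \<inter> R \<noteq> {} then (if special e then 12 else 11) else 10 - de e)" for e
  have near: "r \<notin> f \<and> reach E 3 r v" if "r \<in> R" "f \<in> Tf r \<union> Qf r" "v \<in> f" for r f v
    using cfgD(7,8)[OF cfg[OF that(1)]] that(2,3) by blast
  have PE: "P \<subseteq> E" unfolding P_def using cfgD(2,3)[OF cfg] by blast
  have far2: "False" if "r \<in> R" "r' \<in> R" "r \<noteq> r'" "reach E n r r'" "n \<le> 7" for r r' n
    using Rfar[OF that(1-3)] reach_mono[OF that(4,5)] by blast
  have far_v: "False" if "r \<in> R" "r' \<in> R" "r \<noteq> r'" "reach E 3 r v" "reach E 4 r' v" for r r' v
  proof -
    have "reach E (3+4) r r'" by (rule reach_trans[OF that(4) reach_sym[OF that(5)]])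
    then show False using far2[OF that(1-3), of 7] by simp
  qed
  have nconf: "\<not> conflict E f g" if "r1 \<in> R" "r2 \<in> R" "r1 \<noteq> r2" "f \<in> Tf r1 \<union> Qf r1" "g \<in> Tf r2 \<union> Qf r2"
    for r1 r2 f g
  proof
    assume c: "conflict E f g"
    show False
    proof (cases "f \<inter> g = {}")
      case False
      then obtain v where v: "v \<in> f" "v \<in> g" by auto
      have "reach E 3 r1 v" using near[OF that(1,4) v(1)] by blast
      moreover have "reach E 4 r2 v" using near[OF that(2,5) v(2)] reach_mono[of E 3 r2 v 4] by auto
      ultimately show False using far_v[OF that(1-3)] by blast
    next
      case True
      then obtain h where h: "h \<in> E" "h \<inter> f \<noteq> {}" "h \<inter> g \<noteq> {}" using c unfolding conflict_def by auto
      then obtain p q where pq: "p \<in> h" "p \<in> f" "q \<in> h" "q \<in> g" by auto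
      have "p \<noteq> q" using pq True by auto
      then have "h = {p,q}" using edge_form[OF h(1)] pq by auto
      then have "reach E 4 r2 p" using reach_step[of E 3 r2 q p] near[OF that(2,5) pq(4)] h(1)
        by (simp add: insert_commute numeral_eq_Suc)
      then show False using far_v[OF that(1-3)] near[OF that(1,4) pq(2)] by blast
    qed
  qed
  have matching: "f \<inter> g = {}" if "f \<in> P" "g \<in> P" "f \<noteq> g" for f g
  proof -
    obtain r1 r2 where r: "r1 \<in> R" "r2 \<in> R" "f \<in> Tf r1 \<union> Qf r1" "g \<in> Tf r2 \<union> Qf r2"
      using \<open>f \<in> P\<close> \<open>g \<in> P\<close> unfolding P_def by blast
    show ?thesis
    proof (cases "r1 = r2")
      case True then show ?thesis using cfgD(9)[OF cfg[OF r(1)]] r that(3) by blast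
    next
      case False
      show ?thesis
      proof (rule ccontr)
        assume "f \<inter> g \<noteq> {}"
        then obtain v where v: "v \<in> f" "v \<in> g" by auto
        have "reach E 3 r1 v" using near[OF r(1,3) v(1)] by blast
        moreover have "reach E 4 r2 v" using near[OF r(2,4) v(2)] reach_mono[of E 3 r2 v 4] by auto
        ultimately show False using far_v[OF r(1,2) False] by blast
      qed
    qed
  qed
  have rootP: "r \<notin> f" if "r \<in> R" "f \<in> P" for r f
  proof
    assume rf: "r \<in> f"
    obtain r' where r': "r' \<in> R" "f \<in> Tf r' \<union> Qf r'" using \<open>f \<in> P\<close> unfolding P_def by blast
    show False
    proof (cases "r = r'")
      case True then show False using near[OF r'] rf by blast
    next
      case False
      have "reach E 3 r' r" using near[OF r' rf] by blast
      then show False using far2[OF r'(1) that(1), of 3] False by auto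
    qed
  qed
  have c0prop: "c0 f \<noteq> c0 g" if "f \<in> P" "g \<in> P" "conflict E f g" for f g
  proof
    assume eq: "c0 f = c0 g"
    obtain r1 r2 where r: "r1 \<in> R" "r2 \<in> R" "f \<in> Tf r1 \<union> Qf r1" "g \<in> Tf r2 \<union> Qf r2"
      using \<open>f \<in> P\<close> \<open>g \<in> P\<close> unfolding P_def by blast
    have "r1 = r2" using nconf[OF r(1,2) _ r(3,4)] that(3) by blast
    show False
    proof (cases "f \<in> TT")
      case True
      then have "g \<in> TT" using eq unfolding c0_def by (auto split: if_splits)
      then obtain s1 s2 where "s1 \<in> R" "s2 \<in> R" "f \<in> Tf s1" "g \<in> Tf s2" using True unfolding TT_def by auto
      then have s: "s1 \<in> R" "s2 \<in> R" "f \<in> Tf s1" "g \<in> Tf s2" .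
      show False
      proof (cases "s1 = s2")
        case True then show False using cfgD(10)[OF cfg[OF s(1)]] s(3,4) that(3) by blast
      next
        case False then show False using nconf[OF s(1,2) False] s(3,4) that(3) by blast
      qed
    next
      case False
      then have "g \<notin> TT" using eq unfolding c0_def by (auto split: if_splits)
      then have "f \<in> Qf r1" "g \<in> Qf r2" using False r unfolding TT_def by auto
      then show False using cfgD(11)[OF cfg[OF r(1)]] \<open>r1 = r2\<close> that(3) by blast
    qed
  qed
  have finP: "finite P" using PE finE finite_subset by auto
  have finX: "finite X" unfolding X_def using finE by auto
  have cnt: "card {y\<in>X. conflict E e y \<and> rk y \<le> rk e} + card (c0 ` {y\<in>P. conflict E e y}) < 22"
    if eX: "e \<in> X" for e
  proof -
    have eE: "e \<in> E" and eP: "e \<notin> P" using eX unfolding X_def by auto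
    define N where "N = {f\<in>E. conflict E e f}"
    have fN: "finite N" unfolding N_def using finE by auto
    have cN: "card N \<le> 24" unfolding N_def using card_N[OF eE] .
    have NP: "{y\<in>P. conflict E e y} = N \<inter> P" unfolding N_def using PE by auto
    have key: "card {y\<in>X. conflict E e y \<and> rk y \<le> rk e} + card (c0 ` (N \<inter> P)) \<le> 21"
    proof (cases "e \<inter> R = {}")
      case False
      then obtain r where r: "r \<in> R" "r \<in> e" by auto
      obtain u v where uv: "e = {u,v}" "u \<noteq> v" using edge_form[OF eE] by auto
      obtain x where ex: "e = {r,x}" using uv r by auto
      have rx: "{r,x} \<in> E" using eE ex by simp
      then have xnb: "x \<in> nb r" using nb_iff by simp
      have cr: "config r (sf r) (Tf r) (Qf r)" using cfg[OF r(1)] .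
      have TN: "Tf r \<subseteq> N \<inter> P" using cfgD(2,12)[OF cr] xnb ex r(1) unfolding N_def P_def by blast
      show ?thesis
      proof (cases "special e")
        case True
        then obtain r' where r': "r' \<in> R" "e = {r', sf r'}" unfolding special_def by auto
        have "r' = r"
        proof (rule ccontr)
          assume "r' \<noteq> r"
          then have "r' = x" using r' ex by auto
          moreover have "reach E 1 r x" using rx by simp
          ultimately show False using far2[OF r(1) r'(1), of 1] \<open>r' \<noteq> r\<close> by auto
        qed
        then have es: "e = {r, sf r}" using r' by simp
        have QN: "Qf r \<subseteq> N \<inter> P" using cfgD(3,13)[OF cr] es r(1) unfolding N_def P_def by blast
        define T where "T = Tf r \<union> Qf r"
        have fT: "finite (Tf r)" "finite (Qf r)" using cfgD(4,5)[OF cr] by (metis card.infinite zero_neq_numeral)+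
        have cT: "card T = 5" unfolding T_def using card_Un_disjoint[OF fT cfgD(6)[OF cr]] cfgD(4,5)[OF cr] by simp
        have "c0 ` T \<subseteq> {0,1}" unfolding c0_def by auto
        then have ci: "card (c0 ` T) \<le> 2" using card_mono[of "{0,1}" "c0 ` T"] by simp
        have S0: "{y\<in>X. conflict E e y \<and> rk y \<le> rk e} \<subseteq> N - P - {}" unfolding N_def X_def by auto
        have TNP: "T \<subseteq> N \<inter> P" unfolding T_def using TN QN by blast
        have "card {y\<in>X. conflict E e y \<and> rk y \<le> rk e} + card (c0 ` (N \<inter> P)) + card ({}::'a set set) + card T
            \<le> card N + card (c0 ` T)"
          by (rule count_bound[OF fN _ TNP S0]) simp
        then show ?thesis using cT ci cN by simp
      next
        case False
        have xs: "x \<noteq> sf r" using False ex r(1) unfolding special_def by auto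
        define l where "l = {r, sf r}"
        have lE: "l \<in> E" using cfgD(1)[OF cr] unfolding l_def by simp
        have lP: "l \<notin> P" using rootP[OF r(1)] unfolding l_def by auto
        have lN: "l \<in> N" using lE ex xs unfolding N_def l_def
          by (auto simp: conflict_def doubleton_eq_iff)
        have rkl: "rk l = 12" unfolding rk_def special_def l_def using r(1) by auto
        have rke: "rk e = 11" unfolding rk_def using False r by auto
        have S: "{y\<in>X. conflict E e y \<and> rk y \<le> rk e} \<subseteq> N - P - {l}"
          unfolding N_def X_def using rkl rke by auto
        have cT: "card (Tf r) = 3" using cfgD(4)[OF cr] by simp
        have "Tf r \<noteq> {}" using cT by auto
        then have "c0 ` Tf r = {0}" unfolding c0_def TT_def using r(1) by auto
        then have ci: "card (c0 ` Tf r) = 1" by simp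
        have lNP: "{l} \<subseteq> N - P" using lN lP by blast
        have "card {y\<in>X. conflict E e y \<and> rk y \<le> rk e} + card (c0 ` (N \<inter> P)) + card {l} + card (Tf r)
            \<le> card N + card (c0 ` Tf r)"
          by (rule count_bound[OF fN lNP TN S])
        then show ?thesis using cT ci cN by simp
      qed
    next
      case True
      have eR: "e \<inter> R = {}" using True .
      obtain u v where uv: "e = {u,v}" "u \<in> V" "u \<noteq> v" using edge_form[OF eE] by auto
      obtain r0 where r0: "r0 \<in> R" "reach E 7 r0 u" using cover[OF uv(2)] by auto
      have ex0: "\<exists>r\<in>R. \<exists>x\<in>e. reach E 7 r x" using r0 uv by auto
      have de7: "de e \<le> 7" unfolding de_def using ex0 by (rule Least_le)
      have "\<exists>r\<in>R. \<exists>x\<in>e. reach E (de e) r x" unfolding de_def using ex0 by (rule LeastI)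
      then obtain r x where rx: "r \<in> R" "x \<in> e" "reach E (de e) r x" by auto
      have "de e \<noteq> 0" using rx True by (auto)
      then obtain d where d: "de e = Suc d" using not0_implies_Suc by blast
      have notd: "\<not> reach E d r' y" if "r' \<in> R" "y \<in> e" for r' y
      proof
        assume "reach E d r' y"
        then have "de e \<le> d" unfolding de_def using that by (intro Least_le) auto
        then show False using d by simp
      qed
      obtain p where p: "reach E d r p" "{p,x} \<in> E" using rx d notd by auto
      have pe: "p \<notin> e" using notd rx(1) p(1) by blast
      have pV: "p \<in> V" using eV p(2) by auto
      define L where "L = Eat p - P"
      have LN: "L \<subseteq> N - P"
      proof
        fix f assume "f \<in> L"
        then have f: "f \<in> E" "p \<in> f" "f \<notin> P" unfolding L_def Eat_def by auto
        have "conflict E e f" using conf_via[OF p(2), of x e p f] f rx(2) pe by auto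
        then show "f \<in> N - P" unfolding N_def using f by auto
      qed
      have finEat: "finite (Eat p)" using finE unfolding Eat_def by auto
      have "\<forall>f\<in>Eat p \<inter> P. \<forall>g\<in>Eat p \<inter> P. f = g" using matching unfolding Eat_def by blast
      then have "card (Eat p \<inter> P) \<le> 1"
        using card_le_Suc0_iff_eq[of "Eat p \<inter> P"] finEat by simp
      moreover have "card L = card (Eat p) - card (Eat p \<inter> P)" unfolding L_def
        by (rule card_Diff_subset_Int) (use finEat in simp)
      ultimately have cL: "card L \<ge> 3" using card_Eat[OF pV] by simp
      have rke: "rk e = 10 - de e" unfolding rk_def using True by auto
      have later: "rk f > rk e" if "f \<in> L" for f
      proof -
        have f: "f \<in> E" "p \<in> f" using that unfolding L_def Eat_def by auto
        show ?thesis
        proof (cases "f \<inter> R = {}")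
          case False then show ?thesis unfolding rk_def using rke eR by auto
        next
          case True
          have "de f \<le> d" unfolding de_def using rx(1) f(2) p(1) by (intro Least_le) auto
          then show ?thesis unfolding rk_def using True eR rke d de7 by auto
        qed
      qed
      have S: "{y\<in>X. conflict E e y \<and> rk y \<le> rk e} \<subseteq> N - P - L"
      proof
        fix y assume "y \<in> {y\<in>X. conflict E e y \<and> rk y \<le> rk e}"
        then have y: "y \<in> X" "conflict E e y" "rk y \<le> rk e" by auto
        moreover have "y \<notin> L" using later y(3) by (meson not_le)
        ultimately show "y \<in> N - P - L" unfolding N_def X_def by auto
      qed
      have "card {y\<in>X. conflict E e y \<and> rk y \<le> rk e} + card (c0 ` (N \<inter> P)) + card L + card ({}::'a set set)
            \<le> card N + card (c0 ` {})"
        by (rule count_bound[OF fN LN _ S]) simp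
      then show ?thesis using cL cN by simp
    qed
    then show ?thesis using NP by simp
  qed
  have "\<exists>col. (\<forall>x\<in>X \<union> P. col x < (22::nat)) \<and> (\<forall>x\<in>X \<union> P. \<forall>y\<in>X \<union> P. conflict E x y \<longrightarrow> col x \<noteq> col y)"
  proof (rule greedy[where rk = rk and ?c0.0 = c0])
    show "finite X" by (rule finX)
    show "finite P" by (rule finP)
    show "X \<inter> P = {}" unfolding X_def by auto
    show "\<And>x y. conflict E x y \<Longrightarrow> conflict E y x" using conflict_sym by blast
    show "\<And>x. \<not> conflict E x x" by (simp add: conflict_def)
    show "\<And>x. x \<in> P \<Longrightarrow> c0 x < 22" unfolding c0_def by auto
    show "\<And>x y. x \<in> P \<Longrightarrow> y \<in> P \<Longrightarrow> conflict E x y \<Longrightarrow> c0 x \<noteq> c0 y" by (rule c0prop)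
    show "\<And>x. x \<in> X \<Longrightarrow> card {y\<in>X. conflict E x y \<and> rk y \<le> rk x} + card (c0 ` {y\<in>P. conflict E x y}) < 22"
      by (rule cnt)
  qed
  moreover have "X \<union> P = E" unfolding X_def using PE by auto
  ultimately show ?thesis by auto
qed

end

lemma girth_no_cycle:
  assumes g: "girth E = 5" and c: "is_cycle E vs" and l: "length vs < 5"
  shows False
proof -
  have "girth E \<le> enat (length vs)" unfolding girth_def using c by (intro INF_lower) auto
  then show False using g l by simp
qed

theorem lemma8:
  fixes V :: "'a set" and E :: "'a set set"
  assumes "simple_graph V E"
    and "regular V E 4"
    and "girth E = 5"
  shows "\<exists>col :: 'a set \<Rightarrow> nat. strong_edge_coloring E col \<and> card (col ` E) \<le> 22"
proof -
  have neq: "a \<noteq> b" if "{a,b} \<in> E" for a b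
  proof
    assume "a = b"
    then have "{a} \<in> E" using that by simp
    then obtain u v where "u \<noteq> v" "{a} = {u,v}" using assms(1) unfolding simple_graph_def by blast
    then show False by (metis doubleton_eq_iff insert_absorb2)
  qed
  have no3: False if h: "{a,b} \<in> E" "{b,c} \<in> E" "{c,a} \<in> E" for a b c
  proof -
    have d: "a \<noteq> b" "b \<noteq> c" "c \<noteq> a" using neq h by auto
    have "is_cycle E [a,b,c]" unfolding is_cycle_def
    proof (intro conjI allI impI)
      fix i assume "i < length [a,b,c]"
      then have "i = 0 \<or> i = 1 \<or> i = 2" by auto
      then show "{[a,b,c] ! i, [a,b,c] ! ((i + 1) mod length [a,b,c])} \<in> E" using h by auto
    qed (use d in auto)
    then show False using girth_no_cycle[OF assms(3)] by fastforce
  qed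
  have no4: False if h: "{a,b} \<in> E" "{b,c} \<in> E" "{c,d} \<in> E" "{d,a} \<in> E" "a \<noteq> c" "b \<noteq> d" for a b c d
  proof -
    have dd: "a \<noteq> b" "b \<noteq> c" "c \<noteq> d" "d \<noteq> a" using neq h by auto
    have "is_cycle E [a,b,c,d]" unfolding is_cycle_def
    proof (intro conjI allI impI)
      fix i assume "i < length [a,b,c,d]"
      then have "i = 0 \<or> i = 1 \<or> i = 2 \<or> i = 3" by auto
      then show "{[a,b,c,d] ! i, [a,b,c,d] ! ((i + 1) mod length [a,b,c,d])} \<in> E" using h by auto
    qed (use dd h(5,6) in auto)
    then show False using girth_no_cycle[OF assms(3)] by fastforce
  qed
  interpret g45 V E
    by unfold_locales (use assms(1,2) no3 no4 in blast)+
  obtain col :: "'a set \<Rightarrow> nat" where c1: "\<forall>e\<in>E. col e < 22"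
    and c2: "\<forall>e\<in>E. \<forall>f\<in>E. conflict E e f \<longrightarrow> col e \<noteq> col f"
    using main by blast
  have "strong_edge_coloring E col"
    unfolding strong_edge_coloring_def proper_edge_coloring_def
  proof (intro conjI ballI allI impI)
    fix e f assume "e \<in> E" "f \<in> E" "e \<noteq> f \<and> e \<inter> f \<noteq> {}"
    then show "col e \<noteq> col f" using c2 unfolding conflict_def by blast
  next
    fix a b c d assume p: "path3 E a b c d"
    then have h: "{a,b} \<in> E" "{b,c} \<in> E" "{c,d} \<in> E" "distinct [a,b,c,d]" unfolding path3_def by auto
    have "{a,b} \<noteq> {c,d}" using h(4) by (auto simp: doubleton_eq_iff)
    then have "conflict E {a,b} {c,d}" using conf_via[OF h(2), of b "{a,b}" c "{c,d}"] by auto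
    then show "col {a,b} \<noteq> col {c,d}" using c2 h by blast
  qed
  moreover have "card (col ` E) \<le> 22"
  proof -
    have "col ` E \<subseteq> {..<22}" using c1 by auto
    then show ?thesis using card_mono[of "{..<22}" "col ` E"] by simp
  qed
  ultimately show ?thesis by blast
qed

end
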